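(* Let $k,\ell>0$, $\pi_1\in\mathcal{T}_k$, $\pi_2\in\mathcal{T}_\ell$, let $t=\operatorname{slmax}(\pi_2)$, let $a_1,\dots,a_t$ be the values of the left-to-right maxima of $\mathcal{S}(\pi_2)$ in order, and let $1\le i\le t$. Let $$\pi=C_2(\pi_1,\pi_2,i)=\pi_1^{+(0,k,a_i)}\cdot(k+\ell+1)\cdot\pi_2^{+(k-1,a_i+1,k)}.$$ Then $\pi\in\mathcal{T}_{k+\ell+1}$, and $\operatorname{slmax}(\pi)=\operatorname{slmax}(\pi_1)+\operatorname{slmax}(\pi_2)-i+1$.
   Context: For a finite sequence $A$ of distinct integers, the stack-sorting operator $\mathcal{S}$ is defined by $\mathcal{S}(\epsilon)=\epsilon$ for the empty sequence and, if $A$ is non-empty with largest element $m$, writing $A=A_L\cdot(m)\cdot A_R$ (concatenation), $\mathcal{S}(A)=\mathcal{S}(A_L)\cdot\mathcal{S}(A_R)\cdot(m)$. For $n\ge1$, $\mathcal{T}_n$ is the set of permutations $\sigma\in\mathfrak{S}_n$ (viewed as sequences) with $\mathcal{S}(\mathcal{S}(\sigma))$ equal to the identity. For a sequence $\tau$ of integers and $k_1<k_2$, $\tau^{+(k_1,m,k_2)}$ is obtained by adding $k_1$ to each element strictly smaller than $m$ and $k_2$ to every other element. For a permutation $\sigma$, $\operatorname{slmax}(\sigma)$ is the number of left-to-right maxima of $\mathcal{S}(\sigma)$ (indices $i$ such that $\mathcal{S}(\sigma)(i)>\mathcal{S}(\sigma)(j)$ for all $j<i$). *)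

theory Defs
  imports Main
begin

text \<open>Sequences are lists of natural numbers (permutations use values 1..n).
  The stack-sorting operator S: split at the maximum m, A = A_L m A_R,
  S(A) = S(A_L) S(A_R) m.\<close>

lemma takeWhile_neq_shorter:
  "m \<in> set xs \<Longrightarrow> length (takeWhile (\<lambda>y. y \<noteq> m) xs) < length xs"
  by (induction xs) auto

lemma tl_dropWhile_shorter:
  "xs \<noteq> [] \<Longrightarrow> length (tl (dropWhile P xs)) < length xs"
  using length_dropWhile_le[of P xs] by (cases xs) auto

function ssort :: "nat list \<Rightarrow> nat list" where
  "ssort [] = []"
| "ssort (x # xs) =
     (let m = Max (set (x # xs)) in
        ssort (takeWhile (\<lambda>y. y \<noteq> m) (x # xs))
        @ ssort (tl (dropWhile (\<lambda>y. y \<noteq> m) (x # xs))) @ [m])"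
  by pat_completeness auto
termination
  apply (relation "measure length")
    apply simp
   apply (simp only: in_measure)
   apply (rule takeWhile_neq_shorter)
   apply (metis List.finite_set Max_in list.set_intros(1) empty_iff set_ConsD)
  apply (simp only: in_measure)
  apply (rule tl_dropWhile_shorter) apply simp
  done

definition perms :: "nat \<Rightarrow> nat list set" where
  "perms n = {\<sigma>. distinct \<sigma> \<and> set \<sigma> = {1..n}}"

definition T :: "nat \<Rightarrow> nat list set" where
  "T n = {\<sigma> \<in> perms n. ssort (ssort \<sigma>) = [1..<n+1]}"

definition shift :: "nat \<Rightarrow> nat \<Rightarrow> nat \<Rightarrow> nat list \<Rightarrow> nat list" where
  "shift k1 m k2 xs = map (\<lambda>x. if x < m then x + k1 else x + k2) xs"

definition ltr_max_vals :: "nat list \<Rightarrow> nat list" where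
  "ltr_max_vals xs = [xs ! i. i \<leftarrow> [0..<length xs], \<forall>j<i. xs ! j < xs ! i]"

definition slmax :: "nat list \<Rightarrow> nat" where
  "slmax \<sigma> = length (ltr_max_vals (ssort \<sigma>))"

end

theory Submission imports Defs "HOL-Library.Multiset" begin

fun lm :: "nat \<Rightarrow> nat list \<Rightarrow> nat list" where
  "lm c [] = []"
| "lm c (x # xs) = (if c < x then x # lm x xs else lm c xs)"

definition av231 :: "nat list \<Rightarrow> bool" where
  "av231 w \<longleftrightarrow> (\<forall>p q r. p < q \<longrightarrow> q < r \<longrightarrow> r < length w \<longrightarrow> \<not> (w!r < w!p \<and> w!p < w!q))"

lemma concat_if_map: "concat (map (\<lambda>i. if P i then [f i] else []) ys) = map f (filter P ys)"
  by (induction ys) auto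

lemma G_lm: "concat (map (\<lambda>i. if c < xs!i \<and> (\<forall>j<i. xs!j < xs!i) then [xs!i] else []) [0..<length xs]) = lm c xs"
proof (induction xs arbitrary: c)
  case Nil
  then show ?case by simp
next
  case (Cons x xs)
  define H where "H = (\<lambda>i. if c < (x#xs)!i \<and> (\<forall>j<i. (x#xs)!j < (x#xs)!i) then [(x#xs)!i] else [])"
  have u: "[0..<length (x#xs)] = 0 # map Suc [0..<length xs]"
    by (simp add: map_Suc_upt upt_conv_Cons del: upt_Suc)
  have e: "\<And>i v. (\<forall>j<Suc i. (x#xs)!j < v) = (x < v \<and> (\<forall>j<i. xs!j < v))"
    by (auto simp: less_Suc_eq_0_disj)
  have hs: "H (Suc i) = (if c < xs!i \<and> x < xs!i \<and> (\<forall>j<i. xs!j < xs!i) then [xs!i] else [])" for i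
    unfolding H_def by (simp only: nth_Cons_Suc e) 
  have "concat (map H [0..<length (x#xs)]) = H 0 @ concat (map (\<lambda>i. H (Suc i)) [0..<length xs])"
    unfolding u by (simp add: o_def)
  also have "\<dots> = lm c (x#xs)"
  proof (cases "c < x")
    case True
    have "(\<lambda>i. H (Suc i)) = (\<lambda>i. if x < xs!i \<and> (\<forall>j<i. xs!j < xs!i) then [xs!i] else [])"
      using True unfolding hs by (auto intro!: ext)
    then show ?thesis using True Cons.IH[of x] by (simp add: H_def)
  next
    case False
    have "(\<lambda>i. H (Suc i)) = (\<lambda>i. if c < xs!i \<and> (\<forall>j<i. xs!j < xs!i) then [xs!i] else [])"
      using False unfolding hs by (auto intro!: ext)
    then show ?thesis using False Cons.IH[of c] by (simp add: H_def)
  qed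
  finally show ?case unfolding H_def .
qed

lemma ltr_lm: "0 \<notin> set xs \<Longrightarrow> ltr_max_vals xs = lm 0 xs"
proof -
  assume h: "0 \<notin> set xs"
  have "ltr_max_vals xs = concat (map (\<lambda>i. if (\<forall>j<i. xs!j < xs!i) then [xs!i] else []) [0..<length xs])"
    unfolding ltr_max_vals_def by (induction "[0..<length xs]") simp_all
  also have "\<dots> = concat (map (\<lambda>i. if 0 < xs!i \<and> (\<forall>j<i. xs!j < xs!i) then [xs!i] else []) [0..<length xs])"
  proof (rule arg_cong[where f=concat], rule map_cong[OF refl])
    fix i assume "i \<in> set [0..<length xs]"
    then have "xs ! i \<in> set xs" by simp
    then have "0 < xs!i" using h by (metis gr0I)
    then show "(if (\<forall>j<i. xs!j < xs!i) then [xs!i] else []) = (if 0 < xs!i \<and> (\<forall>j<i. xs!j < xs!i) then [xs!i] else [])" by simp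
  qed
  finally show ?thesis using G_lm by simp
qed

lemma lm_gt: "y \<in> set (lm c xs) \<Longrightarrow> c < y"
proof (induction xs arbitrary: c)
  case Nil
  then show ?case by simp
next
  case (Cons x xs)
  show ?case
  proof (cases "c < x")
    case True
    then have "y = x \<or> y \<in> set (lm x xs)" using Cons.prems by simp
    then show ?thesis using True Cons.IH[of x] by auto
  next
    case False
    then show ?thesis using Cons by simp
  qed
qed

lemma lm_append: "lm c (xs @ ys) = lm c xs @ lm (fold max xs c) ys"
  by (induction xs arbitrary: c) (auto simp: max_def)

lemma lm_cong: "(\<forall>x\<in>set xs. (c < x) = (c' < x)) \<Longrightarrow> lm c xs = lm c' xs"
  by (induction xs arbitrary: c c') auto

lemma lm_map: "strict_mono f \<Longrightarrow> lm (f c) (map f xs) = map f (lm c xs)"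
  by (induction xs arbitrary: c) (auto simp: strict_mono_less)

lemma lm_drop: "j < length (lm c xs) \<Longrightarrow> lm (lm c xs ! j) xs = drop (Suc j) (lm c xs)"
proof (induction xs arbitrary: c j)
  case Nil
  then show ?case by simp
next
  case (Cons x xs)
  show ?case
  proof (cases "c < x")
    case True
    show ?thesis
    proof (cases j)
      case 0
      then show ?thesis using True by simp
    next
      case (Suc j')
      have j': "j' < length (lm x xs)" using Cons.prems True Suc by simp
      have "x < lm x xs ! j'" using lm_gt j' nth_mem by blast
      then show ?thesis using True Suc Cons.IH[OF j'] by simp
    qed
  next
    case False
    have j: "j < length (lm c xs)" using Cons.prems False by simp
    have "c < lm c xs ! j" using lm_gt j nth_mem by blast
    then have "x < lm c xs ! j" using False by simp
    then show ?thesis using False Cons.IH[OF j] by simp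
  qed
qed

lemma lm_pos: "v \<in> set (lm c xs) \<Longrightarrow> \<exists>s<length xs. xs!s = v \<and> (\<forall>j<s. xs!j < v)"
proof (induction xs arbitrary: c)
  case Nil
  then show ?case by simp
next
  case (Cons x xs)
  show ?case
  proof (cases "c < x")
    case True
    show ?thesis
    proof (cases "v = x")
      case True then show ?thesis by auto
    next
      case False
      then have "v \<in> set (lm x xs)" using Cons.prems \<open>c<x\<close> by simp
      then obtain s where s: "s<length xs" "xs!s = v" "\<forall>j<s. xs!j < v" using Cons.IH by blast
      have "x < v" using lm_gt \<open>v \<in> set (lm x xs)\<close> by blast
      then show ?thesis using s by (intro exI[of _ "Suc s"]) (auto simp: less_Suc_eq_0_disj)
    qed
  next
    case False
    then have "v \<in> set (lm c xs)" using Cons.prems by simp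
    then obtain s where s: "s<length xs" "xs!s = v" "\<forall>j<s. xs!j < v" using Cons.IH by blast
    have "x < v" using lm_gt \<open>v \<in> set (lm c xs)\<close> False by fastforce
    then show ?thesis using s by (intro exI[of _ "Suc s"]) (auto simp: less_Suc_eq_0_disj)
  qed
qed

lemma fold_max_le: "c \<le> b \<Longrightarrow> \<forall>x\<in>set xs. x \<le> b \<Longrightarrow> fold max xs c \<le> b"
  by (induction xs arbitrary: c) (auto simp: max_def)

lemma split_max: "m \<in> set w \<Longrightarrow> w = takeWhile (\<lambda>y. y\<noteq>m) w @ m # tl (dropWhile (\<lambda>y. y\<noteq>m) w)"
  by (induction w) auto

lemma mset_ssort: "mset (ssort w) = mset w"
proof (induction w rule: ssort.induct)
  case 1
  then show ?case by simp
next
  case (2 x xs)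
  define m where "m = Max (set (x#xs))"
  have "m \<in> set (x#xs)" unfolding m_def by (rule Max_in) auto
  note sp = split_max[OF this]
  have "mset (ssort (x#xs)) = mset (ssort (takeWhile (\<lambda>y. y \<noteq> m) (x # xs))) + mset (ssort (tl (dropWhile (\<lambda>y. y \<noteq> m) (x # xs)))) + {#m#}"
    by (simp add: m_def Let_def)
  also have "\<dots> = mset (takeWhile (\<lambda>y. y \<noteq> m) (x # xs)) + mset (tl (dropWhile (\<lambda>y. y \<noteq> m) (x # xs))) + {#m#}"
    using 2 m_def by simp
  also have "\<dots> = mset (x#xs)" by (subst (3) sp) simp
  finally show ?case .
qed

lemma set_ssort: "set (ssort w) = set w"
  by (rule mset_eq_setD[OF mset_ssort])

lemma distinct_ssort: "distinct (ssort w) = distinct w"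
  by (rule mset_eq_imp_distinct_iff[OF mset_ssort])

lemma ssort_split:
  assumes "\<forall>x\<in>set X. x < m" "\<forall>x\<in>set Y. x < m"
  shows "ssort (X @ m # Y) = ssort X @ ssort Y @ [m]"
proof -
  have M: "Max (set (X @ m # Y)) = m" using assms by (intro Max_eqI) auto
  have tw: "takeWhile (\<lambda>y. y \<noteq> m) (X @ m # Y) = X"
    using assms by (subst takeWhile_append2) auto
  have dw: "dropWhile (\<lambda>y. y \<noteq> m) (X @ m # Y) = m # Y"
    using assms by (subst dropWhile_append2) auto
  obtain z zs where z: "X @ m # Y = z # zs" by (cases "X @ m # Y") auto
  show ?thesis unfolding z using M tw dw unfolding z by (simp add: Let_def)
qed

lemma ssort_map: "strict_mono f \<Longrightarrow> ssort (map f w) = map f (ssort w)"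
proof (induction w rule: ssort.induct)
  case 1
  then show ?case by simp
next
  case (2 x xs)
  define m where "m = Max (set (x#xs))"
  have M: "Max (set (map f (x#xs))) = f m"
    unfolding m_def set_map
    by (rule mono_Max_commute[symmetric]) (use 2(3) strict_mono_mono in auto)
  have e: "(\<lambda>y. y \<noteq> f m) \<circ> f = (\<lambda>y. y \<noteq> m)"
    using 2(3) by (auto simp: strict_mono_eq)
  have tw: "takeWhile (\<lambda>y. y \<noteq> f m) (map f (x#xs)) = map f (takeWhile (\<lambda>y. y\<noteq>m) (x#xs))"
    by (simp only: takeWhile_map e)
  have dw: "tl (dropWhile (\<lambda>y. y \<noteq> f m) (map f (x#xs))) = map f (tl (dropWhile (\<lambda>y. y\<noteq>m) (x#xs)))"
    by (simp only: dropWhile_map e map_tl)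
  have "ssort (map f (x#xs)) = (let m' = Max (set (map f (x#xs))) in ssort (takeWhile (\<lambda>y. y\<noteq>m') (map f (x#xs))) @ ssort (tl (dropWhile (\<lambda>y. y\<noteq>m') (map f (x#xs)))) @ [m'])"
    by (simp only: list.map ssort.simps(2))
  also have "\<dots> = ssort (map f (takeWhile (\<lambda>y. y\<noteq>m) (x#xs))) @ ssort (map f (tl (dropWhile (\<lambda>y. y\<noteq>m) (x#xs)))) @ [f m]"
    unfolding M Let_def tw dw ..
  also have "\<dots> = map f (ssort (x#xs))"
    using 2 m_def by (simp add: Let_def)
  finally show ?case .
qed

lemma nth_LmR: "(L @ m # R) ! i = (if i < length L then L!i else if i = length L then m else R!(i - length L - 1))"
  by (auto simp: nth_append nth_Cons')

lemma av231_split: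
  assumes d: "distinct (L @ m # R)" and l: "\<forall>x\<in>set L. x < m" and r: "\<forall>x\<in>set R. x < m"
  shows "av231 (L @ m # R) \<longleftrightarrow> av231 L \<and> av231 R \<and> (\<forall>x\<in>set L. \<forall>y\<in>set R. x \<le> y)"
proof
  assume a: "av231 (L @ m # R)"
  let ?w = "L @ m # R"
  have "av231 L" unfolding av231_def
  proof (intro allI impI)
    fix p q r assume h: "p<q" "q<r" "r<length L"
    then show "\<not> (L!r < L!p \<and> L!p < L!q)"
      using a[unfolded av231_def, rule_format, of p q r] by (simp add: nth_append)
  qed
  moreover have "av231 R" unfolding av231_def
  proof (intro allI impI)
    fix p q r assume h: "p<q" "q<r" "r<length R"
    then show "\<not> (R!r < R!p \<and> R!p < R!q)"
      using a[unfolded av231_def, rule_format, of "length L + 1 + p" "length L + 1 + q" "length L + 1 + r"]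
      by (simp add: nth_LmR)
  qed
  moreover have "\<forall>x\<in>set L. \<forall>y\<in>set R. x \<le> y"
  proof (intro ballI)
    fix x y assume x: "x \<in> set L" and y: "y \<in> set R"
    obtain p where p: "p < length L" "L!p = x" using x by (auto simp: in_set_conv_nth)
    obtain r where rr: "r < length R" "R!r = y" using y by (auto simp: in_set_conv_nth)
    have "\<not> (y < x \<and> x < m)"
      using a[unfolded av231_def, rule_format, of p "length L" "length L + 1 + r"] p rr
      by (simp add: nth_LmR)
    then show "x \<le> y" using l x by auto
  qed
  ultimately show "av231 L \<and> av231 R \<and> (\<forall>x\<in>set L. \<forall>y\<in>set R. x \<le> y)" by blast
next
  assume a: "av231 L \<and> av231 R \<and> (\<forall>x\<in>set L. \<forall>y\<in>set R. x \<le> y)"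
  show "av231 (L @ m # R)" unfolding av231_def
  proof (intro allI impI notI)
    fix p q r assume h: "p<q" "q<r" "r<length (L @ m # R)"
      and c: "(L @ m # R)!r < (L @ m # R)!p \<and> (L @ m # R)!p < (L @ m # R)!q"
    let ?n = "length L"
    consider "r < ?n" | "r = ?n" | "r > ?n \<and> p < ?n" | "r > ?n \<and> p = ?n" | "p > ?n" by linarith
    then show False
    proof cases
      case 1
      then show False using a h c unfolding av231_def by (auto simp: nth_LmR)
    next
      case 2
      have "L!p < m" using l h 2 by simp
      then show False using c 2 h by (simp add: nth_LmR)
    next
      case 3
      have "L!p \<in> set L" using 3 by simp
      moreover have "R!(r - ?n - 1) \<in> set R" using 3 h length_append[of L "m#R"] length_Cons[of m R] by (intro nth_mem) linarith
      ultimately have "L!p \<le> R!(r - ?n - 1)" using a by blast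
      then show False using c 3 by (simp add: nth_LmR)
    next
      case 4
      have "q > ?n" using 4 h by simp
      have "R!(q - ?n - 1) < m" using r h 4 by simp
      then show False using c 4 \<open>q > ?n\<close> by (simp add: nth_LmR)
    next
      case 5
      have i: "p-?n-1 < q-?n-1" "q-?n-1 < r-?n-1" "r-?n-1 < length R"
        using h 5 length_append[of L "m#R"] length_Cons[of m R] by linarith+
      have "\<not> (R!(r-?n-1) < R!(p-?n-1) \<and> R!(p-?n-1) < R!(q-?n-1))"
        using a i unfolding av231_def by blast
      then show False using c 5 h by (simp add: nth_LmR)
    qed
  qed
qed

lemma sorted_ssort_iff: "distinct w \<Longrightarrow> sorted (ssort w) \<longleftrightarrow> av231 w"
proof (induction w rule: ssort.induct)
  case 1
  then show ?case by (simp add: av231_def)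
next
  case (2 x xs)
  define m where "m = Max (set (x#xs))"
  define L where "L = takeWhile (\<lambda>y. y \<noteq> m) (x # xs)"
  define R where "R = tl (dropWhile (\<lambda>y. y \<noteq> m) (x # xs))"
  have "m \<in> set (x#xs)" unfolding m_def by (rule Max_in) auto
  then have sp: "x # xs = L @ m # R" unfolding L_def R_def by (rule split_max)
  have le: "\<forall>y\<in>set (x#xs). y \<le> m" unfolding m_def by simp
  have d: "distinct (L @ m # R)" using 2(3) sp by simp
  have le2: "\<forall>y\<in>set L \<union> set R. y \<le> m" using le unfolding sp by simp
  have "m \<notin> set L" "m \<notin> set R" using d by auto
  then have l: "\<forall>y\<in>set L. y < m" and r: "\<forall>y\<in>set R. y < m" using le2 by (metis UnI1 UnI2 le_neq_implies_less)+
  have IL: "sorted (ssort L) = av231 L" using 2(1)[OF m_def] d unfolding L_def by simp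
  have IR: "sorted (ssort R) = av231 R" using 2(2)[OF m_def] d unfolding R_def by simp
  have ss: "ssort (x#xs) = ssort L @ ssort R @ [m]"
    unfolding L_def R_def m_def by (simp add: Let_def)
  have "sorted (ssort (x#xs)) \<longleftrightarrow> sorted (ssort L) \<and> sorted (ssort R) \<and> (\<forall>a\<in>set L. \<forall>b\<in>set R. a \<le> b)"
    unfolding ss using l r by (auto simp: sorted_append set_ssort less_imp_le)
  also have "\<dots> \<longleftrightarrow> av231 (x#xs)" unfolding sp using av231_split[OF d l r] IL IR by simp
  finally show ?case .
qed

lemma av231_cross:
  assumes "av231 X" "av231 Y"
    and c1: "\<And>p q r. p<q \<Longrightarrow> q<length X \<Longrightarrow> r<length Y \<Longrightarrow> \<not>(Y!r < X!p \<and> X!p < X!q)"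
    and c2: "\<And>p q r. p<length X \<Longrightarrow> q<r \<Longrightarrow> r<length Y \<Longrightarrow> \<not>(Y!r < X!p \<and> X!p < Y!q)"
  shows "av231 (X @ Y)"
  unfolding av231_def
proof (intro allI impI notI)
  fix p q r assume h: "p<q" "q<r" "r<length (X@Y)"
    and c: "(X@Y)!r < (X@Y)!p \<and> (X@Y)!p < (X@Y)!q"
  let ?n = "length X"
  consider "r < ?n" | "q < ?n \<and> r \<ge> ?n" | "p < ?n \<and> q \<ge> ?n" | "p \<ge> ?n" by linarith
  then show False
  proof cases
    case 1
    then show False using assms(1) h c unfolding av231_def by (auto simp: nth_append)
  next
    case 2
    have "r - ?n < length Y" using h 2 length_append[of X Y] by linarith
    then show False using c1[of p q "r - ?n"] h c 2 by (simp add: nth_append)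
  next
    case 3
    have "q - ?n < r - ?n" "r - ?n < length Y" using h 3 length_append[of X Y] by linarith+
    then show False using c2[of p "q - ?n" "r - ?n"] h c 3 by (simp add: nth_append)
  next
    case 4
    have i: "p-?n < q-?n" "q-?n < r-?n" "r-?n < length Y"
      using h 4 length_append[of X Y] by linarith+
    have "\<not> (Y!(r-?n) < Y!(p-?n) \<and> Y!(p-?n) < Y!(q-?n))"
      using assms(2) i unfolding av231_def by blast
    then show False using c 4 h by (simp add: nth_append)
  qed
qed

lemma av231_snoc: assumes "av231 V" "\<forall>x\<in>set V. x < M" shows "av231 (V @ [M])"
proof (rule av231_cross)
  show "av231 V" by fact
  show "av231 [M]" by (simp add: av231_def)
  fix p q r
  assume h: "p < q" "q < length V" "r < length [M]"
  then have "V!p \<in> set V" by simp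
  then have "V!p < M" using assms(2) by blast
  then show "\<not> ([M]!r < V!p \<and> V!p < V!q)" using h by auto
next
  fix p q r :: nat
  assume "q < r" "r < length [M]"
  then show "\<not> ([M]!r < V!p \<and> V!p < [M]!q)" by simp
qed

lemma av231_map: "strict_mono f \<Longrightarrow> av231 (map f w) \<longleftrightarrow> av231 w"
  unfolding av231_def by (auto simp: strict_mono_less)

theorem proposition6:
  fixes k l i :: nat and \<pi>1 \<pi>2 :: "nat list"
  assumes "k > 0" and "l > 0"
    and "\<pi>1 \<in> T k" and "\<pi>2 \<in> T l"
    and "1 \<le> i" and "i \<le> slmax \<pi>2"
  shows "(let a = ltr_max_vals (ssort \<pi>2) ! (i - 1);
              \<pi> = shift 0 k a \<pi>1 @ [k + l + 1] @ shift (k - 1) (a + 1) k \<pi>2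
          in \<pi> \<in> T (k + l + 1) \<and> slmax \<pi> = slmax \<pi>1 + slmax \<pi>2 - i + 1)"
proof -
  define A where "A = ssort \<pi>1"
  define B where "B = ssort \<pi>2"
  define a where "a = ltr_max_vals B ! (i - 1)"
  define f1 where "f1 = (\<lambda>x::nat. if x < k then x + 0 else x + a)"
  define f2 where "f2 = (\<lambda>x::nat. if x < a + 1 then x + (k - 1) else x + k)"
  define M where "M = k + l + 1"
  have d1: "distinct \<pi>1" and s1: "set \<pi>1 = {1..k}" and ss1: "ssort A = [1..<k+1]"
    using assms(3) unfolding T_def perms_def A_def by auto
  have d2: "distinct \<pi>2" and s2: "set \<pi>2 = {1..l}" and ss2: "ssort B = [1..<l+1]"
    using assms(4) unfolding T_def perms_def B_def by auto
  have dA: "distinct A" and sA: "set A = {1..k}" unfolding A_def using d1 s1 by (simp_all add: distinct_ssort set_ssort)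
  have dB: "distinct B" and sB: "set B = {1..l}" unfolding B_def using d2 s2 by (simp_all add: distinct_ssort set_ssort)
  have zA: "0 \<notin> set A" using sA by simp
  have zB: "0 \<notin> set B" using sB by simp
  have LB: "ltr_max_vals B = lm 0 B" using ltr_lm[OF zB] .
  have t_eq: "slmax \<pi>2 = length (lm 0 B)" unfolding slmax_def B_def[symmetric] LB ..
  have ilt: "i - 1 < length (lm 0 B)" using assms(5,6) t_eq by linarith
  have a_lm: "a = lm 0 B ! (i - 1)" unfolding a_def LB ..
  have a_in: "a \<in> set (lm 0 B)" unfolding a_lm using ilt by simp
  obtain s where s: "s < length B" "B!s = a" "\<forall>j<s. B!j < a" using lm_pos[OF a_in] by blast
  have aB: "a \<in> set B" using s by auto
  then have a1: "1 \<le> a" and al: "a \<le> l" using sB by auto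
  have sm1: "strict_mono f1" unfolding f1_def by (rule strict_monoI) auto
  have sm2: "strict_mono f2" unfolding f2_def using assms(1) by (intro strict_monoI) auto
  have pe1: "shift 0 k a \<pi>1 = map f1 \<pi>1" unfolding shift_def f1_def ..
  have pe2: "shift (k - 1) (a + 1) k \<pi>2 = map f2 \<pi>2" unfolding shift_def f2_def ..
  define P where "P = map f1 \<pi>1 @ M # map f2 \<pi>2"
  have f1b: "\<And>x. x \<in> {1..k} \<Longrightarrow> 1 \<le> f1 x \<and> f1 x \<le> k + a" unfolding f1_def by auto
  have f2b: "\<And>x. x \<in> {1..l} \<Longrightarrow> k \<le> f2 x \<and> f2 x \<le> k + l" unfolding f2_def using assms(1) by auto
  have b1: "\<forall>x\<in>set (map f1 \<pi>1). x < M" using f1b al unfolding set_map s1 M_def by fastforce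
  have b2: "\<forall>x\<in>set (map f2 \<pi>2). x < M" using f2b unfolding set_map s2 M_def by fastforce
  have SP: "ssort P = map f1 A @ map f2 B @ [M]"
    unfolding P_def ssort_split[OF b1 b2] A_def B_def ssort_map[OF sm1] ssort_map[OF sm2] ..
  have g1: "\<forall>x\<in>set A. 1 \<le> f1 x" using f1b sA by auto
  have g2: "\<forall>x\<in>set B. 1 \<le> f2 x" using f2b sB assms(1) by force
  have zP: "0 \<notin> set (ssort P)" unfolding SP M_def using g1 g2 by auto
  have fm1: "fold max (map f1 A) 0 = k + a"
  proof -
    have "fold max (map f1 A) 0 = Max (set (0 # map f1 A))" by (simp only: Max.set_eq_fold)
    also have "\<dots> = k + a"
    proof (rule Max_eqI)
      show "finite (set (0 # map f1 A))" by simp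
      show "\<And>y. y \<in> set (0 # map f1 A) \<Longrightarrow> y \<le> k + a" using f1b sA by auto
      have "k \<in> set A" using sA assms(1) by simp
      moreover have "f1 k = k + a" unfolding f1_def by simp
      ultimately show "k + a \<in> set (0 # map f1 A)" by (metis image_eqI list.set_intros(2) set_map)
    qed
    finally show ?thesis .
  qed
  have fm2: "fold max (map f2 B) (k + a) \<le> k + l"
    by (rule fold_max_le) (use al f2b sB in auto)
  have lmM: "lm (fold max (map f2 B) (k + a)) [M] = [M]" using fm2 M_def by simp
  have l1: "lm 0 (map f1 A) = map f1 (lm 0 A)"
  proof -
    have "f1 0 = 0" unfolding f1_def using assms(1) by simp
    then show ?thesis using lm_map[OF sm1, of 0 A] by simp
  qed
  have fa: "f2 a = a + k - 1" unfolding f2_def using assms(1) by simp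
  have l2: "lm (k + a) (map f2 B) = map f2 (lm a B)"
  proof -
    have "lm (k + a) (map f2 B) = lm (f2 a) (map f2 B)"
    proof (rule lm_cong, rule ballI)
      fix x assume "x \<in> set (map f2 B)"
      then obtain y where y: "y \<in> set B" "x = f2 y" by auto
      then have "1 \<le> y" using sB by auto
      then show "(k + a < x) = (f2 a < x)" unfolding y(2) fa unfolding f2_def using assms(1) by auto
    qed
    then show ?thesis using lm_map[OF sm2] by simp
  qed
  have l3: "lm a B = drop i (lm 0 B)" using lm_drop[OF ilt] a_lm assms(5) by simp
  have slP: "slmax P = slmax \<pi>1 + slmax \<pi>2 - i + 1"
  proof -
    have "slmax P = length (lm 0 (map f1 A @ map f2 B @ [M]))"
      unfolding slmax_def ltr_lm[OF zP] by (simp only: SP)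
    also have "\<dots> = length (lm 0 A) + (length (lm 0 B) - i) + 1"
      unfolding lm_append fm1 lmM l1 l2 l3 by simp
    also have "slmax \<pi>1 = length (lm 0 A)" unfolding slmax_def A_def[symmetric] ltr_lm[OF zA] ..
    ultimately show ?thesis using t_eq assms(6) by simp
  qed
  have setP: "set P = {1..M}"
  proof
    show "set P \<subseteq> {1..M}"
    proof
      fix x assume "x \<in> set P"
      then consider (c1) y where "y \<in> set \<pi>1" "x = f1 y" | (c2) "x = M" | (c3) y where "y \<in> set \<pi>2" "x = f2 y"
        unfolding P_def by auto
      then show "x \<in> {1..M}"
      proof cases
        case c1
        then have "1 \<le> x \<and> x \<le> k + a" using f1b s1 by simp
        then show ?thesis using al unfolding M_def by simp
      next
        case c2
        then show ?thesis unfolding M_def by simp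
      next
        case c3
        then have "k \<le> x \<and> x \<le> k + l" using f2b s2 by simp
        then show ?thesis using assms(1) unfolding M_def by simp
      qed
    qed
  next
    show "{1..M} \<subseteq> set P"
    proof
      fix x assume x: "x \<in> {1..M}"
      consider "x < k" | "x = k + a" | "k \<le> x \<and> x < k + a" | "k + a < x \<and> x \<le> k + l" | "x = M"
        using x unfolding M_def by fastforce
      then show "x \<in> set P"
      proof cases
        case 1
        then have "x = f1 x" "x \<in> set \<pi>1" using x s1 unfolding f1_def by auto
        then show ?thesis unfolding P_def by (metis UnI1 image_eqI set_append set_map)
      next
        case 2
        then have "x = f1 k" "k \<in> set \<pi>1" using s1 assms(1) unfolding f1_def by auto
        then show ?thesis unfolding P_def by (metis UnI1 image_eqI set_append set_map)
      next
        case 3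
        then have "x = f2 (x - k + 1)" "x - k + 1 \<in> set \<pi>2" using s2 al assms(1) unfolding f2_def by auto
        then show ?thesis unfolding P_def by (metis UnI2 image_eqI set_append set_map list.set_intros(2))
      next
        case 4
        then have "x = f2 (x - k)" "x - k \<in> set \<pi>2" using s2 a1 assms(1) unfolding f2_def by auto
        then show ?thesis unfolding P_def by (metis UnI2 image_eqI set_append set_map list.set_intros(2))
      next
        case 5
        then show ?thesis unfolding P_def by simp
      qed
    qed
  qed
  have distP: "distinct P"
  proof -
    have "distinct (map f1 \<pi>1)" using d1 sm1 by (simp add: distinct_map strict_mono_imp_inj_on)
    moreover have "distinct (map f2 \<pi>2)" using d2 sm2 by (simp add: distinct_map strict_mono_imp_inj_on)
    moreover have "set (map f1 \<pi>1) \<inter> set (map f2 \<pi>2) = {}"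
    proof -
      have "f1 x \<noteq> f2 y" if "x \<in> {1..k}" "y \<in> {1..l}" for x y
        using that assms(1) unfolding f1_def f2_def by auto
      then show ?thesis using s1 s2 by auto
    qed
    ultimately show ?thesis unfolding P_def using b1 b2 by auto
  qed
  have avA: "av231 A" using sorted_ssort_iff[OF dA] unfolding ss1 by (simp del: upt_Suc)
  have avB: "av231 B" using sorted_ssort_iff[OF dB] unfolding ss2 by (simp del: upt_Suc)
  have avX: "av231 (map f1 A @ map f2 B)"
  proof (rule av231_cross)
    show "av231 (map f1 A)" using avA av231_map[OF sm1] by simp
    show "av231 (map f2 B)" using avB av231_map[OF sm2] by simp
  next
    fix p q r assume h: "p < q" "q < length (map f1 A)" "r < length (map f2 B)"
    have x: "A!p \<in> {1..k}" "A!q \<in> {1..k}" using h sA by (metis less_trans length_map nth_mem)+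
    have z: "B!r \<in> {1..l}" using h sB by (metis length_map nth_mem)
    have key: "\<not> (f2 z' < f1 x' \<and> f1 x' < f1 y')" if "x' \<in> {1..k}" "y' \<in> {1..k}" "z' \<in> {1..l}" for x' y' z'
      using that assms(1) unfolding f1_def f2_def by auto
    show "\<not> (map f2 B ! r < map f1 A ! p \<and> map f1 A ! p < map f1 A ! q)"
      using key[OF x z] h by simp
  next
    fix p q r assume h: "p < length (map f1 A)" "q < r" "r < length (map f2 B)"
    have x: "A!p \<in> {1..k}" using h sA by (metis length_map nth_mem)
    have y: "B!q \<in> {1..l}" "B!r \<in> {1..l}" using h sB by (metis less_trans length_map nth_mem)+
    show "\<not> (map f2 B ! r < map f1 A ! p \<and> map f1 A ! p < map f2 B ! q)"
    proof
      assume c: "map f2 B ! r < map f1 A ! p \<and> map f1 A ! p < map f2 B ! q"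
      have xk: "A!p = k"
      proof (rule ccontr)
        assume "A!p \<noteq> k"
        then have "A!p < k" using x by auto
        then have "map f1 A ! p < k" using h unfolding f1_def by simp
        moreover have "k \<le> map f2 B ! r" using h f2b y by simp
        ultimately show False using c by simp
      qed
      then have "map f1 A ! p = k + a" using h unfolding f1_def by simp
      then have c': "f2 (B!r) < k + a" "k + a < f2 (B!q)" using c h by simp_all
      have ya: "a < B!q"
      proof (rule ccontr)
        assume "\<not> a < B!q"
        then have "f2 (B!q) = B!q + (k - 1)" unfolding f2_def by simp
        then show False using c'(2) \<open>\<not> a < B!q\<close> assms(1) by simp
      qed
      have za: "B!r \<le> a"
      proof (rule ccontr)
        assume "\<not> B!r \<le> a"
        then have "f2 (B!r) = B!r + k" unfolding f2_def by simp
        then show False using c'(1) \<open>\<not> B!r \<le> a\<close> by simp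
      qed
      have rlt: "r < length B" "q < length B" using h by auto
      consider "s < q" | "s = q" | "q < s" by linarith
      then show False
      proof cases
        case 1
        show False
        proof (cases "B!r = a")
          case True
          then have "r = s" using s dB rlt nth_eq_iff_index_eq by metis
          then show False using 1 h by simp
        next
          case False
          then have "B!r < a" using za by simp
          have "\<not> (B!r < B!s \<and> B!s < B!q)" using avB 1 h rlt unfolding av231_def by blast
          then show False using ya s(2) \<open>B!r < a\<close> by simp
        qed
      next
        case 2
        then show False using ya s by simp
      next
        case 3
        then show False using ya s by auto
      qed
    qed
  qed
  have avW: "av231 (ssort P)"
  proof -
    have e: "ssort P = (map f1 A @ map f2 B) @ [M]" unfolding SP by simp
    have "\<forall>x\<in>set (map f1 A @ map f2 B). x < M"
      using b1 b2 unfolding A_def B_def set_append set_map set_ssort by blast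
    then show ?thesis unfolding e using av231_snoc avX by blast
  qed
  have dW: "distinct (ssort P)" using distP by (simp add: distinct_ssort)
  have sW: "set (ssort (ssort P)) = {1..M}" using setP by (simp add: set_ssort)
  have srt: "sorted (ssort (ssort P))" using sorted_ssort_iff[OF dW] avW by simp
  have dW2: "distinct (ssort (ssort P))" using dW by (simp only: distinct_ssort)
  have su: "sorted [1..<M+1]" by (rule sorted_upt)
  have du: "distinct [1..<M+1]" by (rule distinct_upt)
  have "set [1..<M+1] = {1..<M+1}" by (rule set_upt)
  then have setu: "set (ssort (ssort P)) = set [1..<M+1]" unfolding sW by auto
  have "ssort (ssort P) = [1..<M+1]"
    by (rule sorted_distinct_set_unique[OF srt dW2 su du setu])
  then have PT: "P \<in> T M" unfolding T_def perms_def using distP setP by blast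
  show ?thesis
    unfolding Let_def B_def[symmetric] a_def[symmetric] pe1 pe2
    using PT slP unfolding P_def M_def by (simp only: append_Cons append_Nil)
qed

end
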